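(* Let $q$ be a prime power, $n\ge 4$, $0\le h\le q^2-2$ and $(x,y)\in S_{\alpha^h}$. Then $$\left|\{z\in\Phi(n,q):(x,z)\in T,\ (z,y)\in T\}\right| = q^2\,|\Phi(n-2,q)|.$$ In particular (taking $h=0$) the valency of $T$ is $q^2|\Phi(n-2,q)|$.
   Context: Let $V=\mathbb{F}_{q^2}^m$ with Hermitian form $\langle x,y\rangle=\sum_k x_k y_k^{\,q}$ and $\Phi(m,q)=\{x\in\mathbb{F}_{q^2}^m\setminus\{0\}:\langle x,x\rangle=0\}$. Fix a primitive element $\alpha$ of $\mathbb{F}_{q^2}$. On $\Phi=\Phi(n,q)$ let $S_{\alpha^h}=\{(x,y)\in\Phi\times\Phi:y=\alpha^hx\}$ and $T=\{(x,y)\in\Phi\times\Phi:\langle x,y\rangle=0,\ y\notin\mathrm{Span}\{x\}\}$. *)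

theory Defs
  imports "HOL-Computational_Algebra.Primes"
begin

text \<open>Vectors of F_{q^2}^m are represented as lists of length m over a finite field
  type 'a with CARD('a) = q^2.\<close>

definition herm :: "nat \<Rightarrow> 'a::field list \<Rightarrow> 'a list \<Rightarrow> 'a" where
  "herm q x y = (\<Sum>k<length x. x ! k * (y ! k) ^ q)"

definition smult_vec :: "'a::field \<Rightarrow> 'a list \<Rightarrow> 'a list" where
  "smult_vec c x = map (\<lambda>a. c * a) x"

definition span1 :: "'a::field list \<Rightarrow> 'a list set" where
  "span1 x = {smult_vec c x | c. True}"

definition Phi :: "nat \<Rightarrow> nat \<Rightarrow> 'a::field list set" where
  "Phi m q = {x. length x = m \<and> x \<noteq> replicate m 0 \<and> herm q x x = 0}"

definition S_rel :: "nat \<Rightarrow> nat \<Rightarrow> 'a::field \<Rightarrow> ('a list \<times> 'a list) set" where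
  "S_rel n q c = {(x, y). x \<in> Phi n q \<and> y \<in> Phi n q \<and> y = smult_vec c x}"

definition T_rel :: "nat \<Rightarrow> nat \<Rightarrow> ('a::field list \<times> 'a list) set" where
  "T_rel n q = {(x, y). x \<in> Phi n q \<and> y \<in> Phi n q \<and> herm q x y = 0 \<and> y \<notin> span1 x}"

definition primitive_elem :: "'a::field \<Rightarrow> bool" where
  "primitive_elem a \<longleftrightarrow> (\<forall>z. z \<noteq> 0 \<longrightarrow> (\<exists>k::nat. z = a ^ k))"

end

theory Submission
  imports Defs "HOL-Number_Theory.Residues" "HOL-Computational_Algebra.Polynomial"
begin

lemma char_frob:
  fixes a b :: "'a::{finite,field}"
  assumes "prime p" "e \<ge> 1" "q = p ^ e" "card (UNIV :: 'a set) = q ^ 2"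
  shows "(a + b) ^ q = a ^ q + b ^ q"
proof -
  have cp: "prime CHAR('a)"
    by (rule prime_CHAR_semidom, rule finite_imp_CHAR_pos, simp)
  have "CHAR('a) dvd p ^ (e * 2)"
    using CHAR_dvd_CARD[where 'a='a] assms by (simp add: power_mult)
  hence "CHAR('a) dvd p" using cp prime_dvd_power by blast
  hence "CHAR('a) = p" using cp assms(1) by (simp add: primes_dvd_imp_eq)
  thus ?thesis using freshmans_dream'[OF cp] assms(3) by blast
qed

lemma field_pow_card:
  fixes x :: "'a::{finite,field}"
  shows "x ^ card (UNIV :: 'a set) = x"
proof (cases "x = 0")
  case False
  have "x * (\<Prod>y\<in>UNIV-{0}. x * y) = x * x ^ (card (UNIV :: 'a set) - 1) * \<Prod>(UNIV-{0})"
    by (simp add: prod.distrib mult_ac)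
  also have "x * x ^ (card (UNIV :: 'a set) - 1) = x ^ Suc (card (UNIV :: 'a set) - 1)"
    by (subst power_Suc) auto
  also have "Suc (card (UNIV :: 'a set) - 1) = card (UNIV :: 'a set)"
    using finite_UNIV_card_ge_0[where ?'a = 'a] by simp
  also have "(\<Prod>y\<in>UNIV-{0}. x * y) = (\<Prod>y\<in>UNIV-{0}. y)"
    by (rule prod.reindex_bij_witness[of _ "\<lambda>y. y / x" "\<lambda>y. x * y"]) (use False in auto)
  finally show ?thesis
    by simp
qed (use finite_UNIV_card_ge_0[where ?'a = 'a] in auto)

locale hsetup =
  fixes q :: nat and cj :: "'a::{finite,field} \<Rightarrow> 'a"
  assumes cj_def: "cj = (\<lambda>t. t ^ q)"
  and card: "card (UNIV :: 'a set) = q ^ 2"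
  and q2: "q \<ge> 2"
  and cj_add: "cj (a + b) = cj a + cj b"
begin

lemma cj_mult: "cj (a * b) = cj a * cj b" by (simp add: cj_def power_mult_distrib)
lemma cj_0[simp]: "cj 0 = 0" using q2 by (simp add: cj_def)
lemma cj_1[simp]: "cj 1 = 1" by (simp add: cj_def)
lemma cj_cj[simp]: "cj (cj a) = a"
proof -
  have "cj (cj a) = (a ^ q) ^ q" by (simp add: cj_def)
  also have "\<dots> = a ^ (q * q)" by (rule power_mult[symmetric])
  also have "q * q = card (UNIV :: 'a set)" using card by (simp add: power2_eq_square)
  finally show ?thesis using field_pow_card by simp
qed
lemma cj_inj: "cj a = cj b \<longleftrightarrow> a = b" by (metis cj_cj)
lemma cj_eq0[simp]: "cj a = 0 \<longleftrightarrow> a = 0" using cj_inj[of a 0] by simp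
lemma cj_neg: "cj (- a) = - cj a"
proof -
  have "cj (-a) + cj a = 0" using cj_add[of "-a" a] by simp
  thus ?thesis by (simp add: eq_neg_iff_add_eq_0)
qed
lemma cj_diff: "cj (a - b) = cj a - cj b"
  using cj_add[of a "-b"] cj_neg[of b] by simp
lemma cj_inverse: "cj (inverse a) = inverse (cj a)"
  unfolding cj_def by (rule power_inverse)
lemma cj_sum: "cj (sum f A) = sum (\<lambda>i. cj (f i)) A"
  by (induction A rule: infinite_finite_induct) (auto simp: cj_add)


lemma herm_cj: fixes u v w :: "'a list" shows "herm q u v = (\<Sum>k<length u. u!k * cj (v!k))" by (simp add: herm_def cj_def)

end

definition vadd :: "'a::field list \<Rightarrow> 'a list \<Rightarrow> 'a list" where
  "vadd u v = map2 (+) u v"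
definition vsub :: "'a::field list \<Rightarrow> 'a list \<Rightarrow> 'a list" where
  "vsub u v = map2 (-) u v"

lemma length_vadd[simp]: "length (vadd u v) = min (length u) (length v)" by (simp add: vadd_def)
lemma length_vsub[simp]: "length (vsub u v) = min (length u) (length v)" by (simp add: vsub_def)
lemma length_smult[simp]: "length (smult_vec c u) = length u" by (simp add: smult_vec_def)
lemma nth_vadd[simp]: "k < length u \<Longrightarrow> k < length v \<Longrightarrow> vadd u v ! k = u!k + v!k" by (simp add: vadd_def)
lemma nth_vsub[simp]: "k < length u \<Longrightarrow> k < length v \<Longrightarrow> vsub u v ! k = u!k - v!k" by (simp add: vsub_def)
lemma nth_smult[simp]: "k < length u \<Longrightarrow> smult_vec c u ! k = c * u!k" by (simp add: smult_vec_def)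

context hsetup begin


lemma herm_vadd1: fixes u v w :: "'a list" shows "length u = length v \<Longrightarrow> length w = length u \<Longrightarrow> herm q (vadd u v) w = herm q u w + herm q v w"
  unfolding herm_cj by (simp add: sum.distrib[symmetric] distrib_right)
lemma herm_vsub1: fixes u v w :: "'a list" shows "length u = length v \<Longrightarrow> length w = length u \<Longrightarrow> herm q (vsub u v) w = herm q u w - herm q v w"
  unfolding herm_cj by (simp add: sum_subtractf[symmetric] left_diff_distrib)
lemma herm_vadd2: fixes u v w :: "'a list" shows "length u = length v \<Longrightarrow> length w = length u \<Longrightarrow> herm q u (vadd v w) = herm q u v + herm q u w"
  unfolding herm_cj by (simp add: sum.distrib[symmetric] distrib_left cj_add)
lemma herm_vsub2: fixes u v w :: "'a list" shows "length u = length v \<Longrightarrow> length w = length u \<Longrightarrow> herm q u (vsub v w) = herm q u v - herm q u w"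
  unfolding herm_cj by (simp add: sum_subtractf[symmetric] right_diff_distrib cj_diff)
lemma herm_smult1: fixes u v w :: "'a list" shows "herm q (smult_vec c u) w = c * herm q u w"
  unfolding herm_cj by (simp add: sum_distrib_left mult.assoc)
lemma herm_smult2: fixes u v w :: "'a list" shows "length w = length u \<Longrightarrow> herm q u (smult_vec c w) = cj c * herm q u w"
  unfolding herm_cj by (simp add: sum_distrib_left cj_mult mult_ac)
lemma herm_swap: fixes u v w :: "'a list" shows "length u = length v \<Longrightarrow> cj (herm q u v) = herm q v u"
  unfolding herm_cj by (simp add: cj_sum cj_mult mult.commute)
lemma herm_self_fix: fixes u v w :: "'a list" shows "cj (herm q u u) = herm q u u"
  using herm_swap by blast
lemma herm_zero1[simp]: fixes u v w :: "'a list" shows "herm q (replicate n 0) w = 0"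
  unfolding herm_cj by simp
lemma herm_zero2[simp]: fixes u v w :: "'a list" shows "herm q u (replicate (length u) 0) = 0"
  unfolding herm_cj by simp
lemma herm_Cons: "herm q (a # u) (b # v) = a * cj b + herm q u v"
  unfolding herm_cj by (simp add: sum.lessThan_Suc_shift del: sum.lessThan_Suc)

end

lemma fiber_count:
  fixes f :: "'b \<Rightarrow> 'c"
  assumes "finite A" "finite C" "f ` A \<subseteq> C" "\<And>r. card {a\<in>A. f a = r} \<le> k"
    "card C \<le> c" "card A = k * c" "r \<in> C"
  shows "card {a\<in>A. f a = r} = k"
proof -
  have AU: "A = (\<Union>r\<in>C. {a\<in>A. f a = r})" using assms(3) by auto
  have "card A = (\<Sum>r\<in>C. card {a\<in>A. f a = r})"
    by (subst AU, rule card_UN_disjoint) (use assms(1,2) in auto)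
  moreover have "(\<Sum>r\<in>C. card {a\<in>A. f a = r}) \<le> (\<Sum>r\<in>C. k)"
    by (rule sum_mono) (use assms(4) in auto)
  moreover have "(\<Sum>r\<in>C. k) \<le> card A" using assms(5,6) by simp
  ultimately have "(\<Sum>r\<in>C. card {a\<in>A. f a = r}) = (\<Sum>r\<in>C. k)" by linarith
  thus ?thesis by (rule sum_mono_inv) (use assms in auto)
qed

lemma roots_bound:
  fixes c d :: "'a::field"
  assumes "2 \<le> k"
  shows "card {x. x ^ k + c * x + d = 0} \<le> k"
proof -
  define P where "P = monom 1 k + [:d, c:]"
  have dP: "degree P = k" unfolding P_def
    by (subst degree_add_eq_left) (use assms in \<open>auto simp: degree_monom_eq degree_pCons_le\<close>)
  hence "P \<noteq> 0" using assms by auto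
  hence "card {x. poly P x = 0} \<le> degree P" by (rule card_poly_roots_bound)
  moreover have "poly P x = x ^ k + c * x + d" for x
    unfolding P_def by (simp add: poly_monom algebra_simps)
  ultimately show ?thesis using dP by simp
qed

context hsetup begin

lemma finite_all[simp]: "finite (A :: 'a set)" by simp

lemma fixed_card: "card {r. cj r = r} \<le> q"
proof -
  have "{r. cj r = r} = {x. x ^ q + (-1) * x + 0 = 0}" by (auto simp: cj_def)
  thus ?thesis using roots_bound[OF q2] by metis
qed

lemma trace_count:
  assumes "cj r = r" shows "card {t. t + cj t = r} = q"
proof -
  have "card {t\<in>UNIV. t + cj t = r} = q"
  proof (rule fiber_count[where C="{r. cj r = r}" and c=q])
    show "(\<lambda>t. t + cj t) ` UNIV \<subseteq> {r. cj r = r}" by (auto simp: cj_add add.commute)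
    show "card {a\<in>UNIV. a + cj a = s} \<le> q" for s
    proof -
      have "{a\<in>UNIV. a + cj a = s} = {x. x ^ q + 1 * x + (-s) = 0}"
        by (auto simp: cj_def algebra_simps)
      thus ?thesis using roots_bound[OF q2] by metis
    qed
    show "card {r. cj r = r} \<le> q" by (rule fixed_card)
    show "card (UNIV :: 'a set) = q * q" using card by (simp add: power2_eq_square)
  qed (use assms in auto)
  thus ?thesis by simp
qed

lemma norm_count:
  assumes "cj r = r" "r \<noteq> 0" shows "card {t. t * cj t = r} = q + 1"
proof -
  have C: "card {r. r \<noteq> 0 \<and> cj r = r} \<le> q - 1"
  proof -
    have "{r. r \<noteq> 0 \<and> cj r = r} = {r. cj r = r} - {0}" by auto
    hence "card {r. r \<noteq> 0 \<and> cj r = r} = card {r. cj r = r} - 1"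
      by (simp add: card_Diff_singleton)
    thus ?thesis using fixed_card by simp
  qed
  have "card {t\<in>UNIV - {0}. t * cj t = r} = q + 1"
  proof (rule fiber_count[where C="{r. r \<noteq> 0 \<and> cj r = r}" and c="q - 1"])
    show "(\<lambda>t. t * cj t) ` (UNIV - {0}) \<subseteq> {r. r \<noteq> 0 \<and> cj r = r}" by (auto simp: cj_mult mult.commute)
    show "card {a\<in>UNIV - {0}. a * cj a = s} \<le> q + 1" for s
    proof -
      have "{a\<in>UNIV - {0}. a * cj a = s} \<subseteq> {x. x ^ (q + 1) + 0 * x + (-s) = 0}"
        by (auto simp: cj_def algebra_simps)
      hence "card {a\<in>UNIV - {0}. a * cj a = s} \<le> card {x. x ^ (q + 1) + 0 * x + (-s) = 0}"
        by (intro card_mono) auto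
      also have "\<dots> \<le> q + 1" by (rule roots_bound) (use q2 in auto)
      finally show ?thesis .
    qed
    show "card (UNIV - {0::'a}) = (q + 1) * (q - 1)"
      using card q2 by (simp add: card_Diff_singleton power2_eq_square algebra_simps)
  qed (use assms C in auto)
  moreover have "{t\<in>UNIV - {0}. t * cj t = r} = {t. t * cj t = r}" using assms by auto
  ultimately show ?thesis by simp
qed

lemma norm_zero: "{t. t * cj t = 0} = {0}" by auto


lemma pair_count:
  assumes "cj r = r"
  shows "card {(a, b). a * cj b + b * cj a = r} = q ^ 3 - q + (if r = 0 then q ^ 2 else 0)"
proof -
  define F where "F b = {a. a * cj b + b * cj a = r}" for b
  have eq: "{(a, b). a * cj b + b * cj a = r} = (\<lambda>(b, a). (a, b)) ` (SIGMA b:UNIV. F b)"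
    by (auto simp: F_def image_iff)
  have "card {(a, b). a * cj b + b * cj a = r} = card (SIGMA b:UNIV. F b)"
    unfolding eq by (rule card_image) (auto simp: inj_on_def)
  also have "\<dots> = (\<Sum>b\<in>UNIV. card (F b))" by (rule card_SigmaI) auto
  also have "\<dots> = card (F 0) + (\<Sum>b\<in>UNIV - {0}. card (F b))"
    by (rule sum.remove) auto
  also have "(\<Sum>b\<in>UNIV - {0}. card (F b)) = (\<Sum>b\<in>UNIV - {0::'a}. q)"
  proof (rule sum.cong[OF refl])
    fix b :: 'a assume "b \<in> UNIV - {0}"
    hence b: "b \<noteq> 0" by auto
    have "(\<lambda>a. a * cj b) ` F b = {t. t + cj t = r}"
    proof (intro equalityI subsetI)
      fix t assume "t \<in> (\<lambda>a. a * cj b) ` F b"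
      then obtain a where "a \<in> F b" "t = a * cj b" by auto
      thus "t \<in> {t. t + cj t = r}" by (simp add: F_def cj_mult mult.commute)
    next
      fix t assume t: "t \<in> {t. t + cj t = r}"
      have e1: "t * inverse (cj b) * cj b = t" using b by simp
      have "cj (t * inverse (cj b)) = cj t * inverse b" by (simp only: cj_mult cj_inverse cj_cj)
      hence e2: "b * cj (t * inverse (cj b)) = cj t" using b by simp
      have "t * inverse (cj b) \<in> F b"
        using t unfolding F_def by (simp only: e1 e2 mem_Collect_eq)
      moreover have "t = t * inverse (cj b) * cj b" using b by simp
      ultimately show "t \<in> (\<lambda>a. a * cj b) ` F b" by blast
    qed
    moreover have "inj_on (\<lambda>a. a * cj b) (F b)" using b by (auto simp: inj_on_def)
    ultimately show "card (F b) = q" using trace_count[OF assms] card_image by metis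
  qed
  also have "\<dots> = (q ^ 2 - 1) * q" using card by (simp add: card_Diff_singleton)
  also have "card (F 0) = (if r = 0 then q ^ 2 else 0)" using card by (auto simp: F_def)
  finally show ?thesis
    by (simp add: algebra_simps power3_eq_cube power2_eq_square diff_mult_distrib)
qed

definition Nc :: "nat \<Rightarrow> nat" where
  "Nc m = card {v :: 'a list. length v = m \<and> herm q v v = 0}"

lemma card_V: "card {v :: 'a list. length v = m} = q ^ (2 * m)"
proof -
  have "card {v :: 'a list. set v \<subseteq> UNIV \<and> length v = m} = card (UNIV :: 'a set) ^ m"
    by (rule card_lists_length_eq) simp
  thus ?thesis using card by (simp add: power_mult)
qed

lemma finite_V: "finite {v :: 'a list. length v = m}"
  using finite_lists_length_eq[of "UNIV :: 'a set" m] by simp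

lemma Nc_le: "Nc m \<le> q ^ (2 * m)"
  unfolding Nc_def card_V[symmetric] by (rule card_mono[OF finite_V]) auto

lemma Nc_Suc: "Nc (Suc m) = Nc m + (q + 1) * (q ^ (2 * m) - Nc m)"
proof -
  define V where "V = {v :: 'a list. length v = m}"
  define G where "G u = {a. a * cj a = - herm q u u}" for u :: "'a list"
  have eq: "{v :: 'a list. length v = Suc m \<and> herm q v v = 0} = (\<lambda>(u, a). a # u) ` (SIGMA u:V. G u)"
  proof (intro equalityI subsetI)
    fix v :: "'a list" assume "v \<in> {v. length v = Suc m \<and> herm q v v = 0}"
    then obtain a u where v: "v = a # u" "length u = m" "herm q (a # u) (a # u) = 0"
      by (cases v) auto
    hence "a * cj a = - herm q u u" by (simp add: herm_Cons eq_neg_iff_add_eq_0)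
    with v show "v \<in> (\<lambda>(u, a). a # u) ` (SIGMA u:V. G u)" by (auto simp: V_def G_def image_iff)
  qed (auto simp: V_def G_def herm_Cons)
  have "Nc (Suc m) = card (SIGMA u:V. G u)"
    unfolding Nc_def eq by (rule card_image) (auto simp: inj_on_def)
  also have "\<dots> = (\<Sum>u\<in>V. card (G u))" by (rule card_SigmaI) (auto simp: V_def finite_V)
  also have "\<dots> = (\<Sum>u\<in>V. if herm q u u = 0 then 1 else q + 1)"
  proof (rule sum.cong[OF refl])
    fix u assume "u \<in> V"
    show "card (G u) = (if herm q u u = 0 then 1 else q + 1)"
    proof (cases "herm q u u = 0")
      case True thus ?thesis by (simp add: G_def norm_zero)
    next
      case False
      have "cj (- herm q u u) = - herm q u u" by (simp add: cj_neg herm_self_fix)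
      thus ?thesis using False norm_count[of "- herm q u u"] by (simp add: G_def)
    qed
  qed
  also have "\<dots> = card (V \<inter> {u. herm q u u = 0}) + (q + 1) * card (V \<inter> - {u. herm q u u = 0})"
    by (subst sum.If_cases) (auto simp: V_def finite_V)
  also have "V \<inter> {u. herm q u u = 0} = {v :: 'a list. length v = m \<and> herm q v v = 0}"
    by (auto simp: V_def)
  also have "card (V \<inter> - {u. herm q u u = 0}) = card V - card {v :: 'a list. length v = m \<and> herm q v v = 0}"
  proof -
    have "V \<inter> - {u. herm q u u = 0} = V - {v :: 'a list. length v = m \<and> herm q v v = 0}"
      by (auto simp: V_def)
    moreover have sub: "{v :: 'a list. length v = m \<and> herm q v v = 0} \<subseteq> V" by (auto simp: V_def)
    moreover have "finite V" by (simp add: V_def finite_V)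
    ultimately show ?thesis using card_Diff_subset[OF finite_subset[OF sub] sub] by simp
  qed
  finally show ?thesis by (simp add: Nc_def V_def card_V)
qed

lemma Nc_SucSuc: "int (Nc (Suc (Suc m))) = int q ^ 2 * int (Nc m) + (int q ^ 3 - int q) * int q ^ (2 * m)"
proof -
  have gen: "int (Nc (Suc k)) = (int q + 1) * int q ^ (2 * k) - int q * int (Nc k)" for k
  proof -
    obtain D where D: "q ^ (2 * k) = Nc k + D" using Nc_le[of k] le_Suc_ex by blast
    have "Nc (Suc k) = Nc k + (q + 1) * D" using Nc_Suc[of k] D by simp
    moreover have "int q ^ (2 * k) = int (Nc k) + int D" using D[THEN arg_cong[of _ _ int]] by simp
    ultimately show ?thesis by (simp add: algebra_simps)
  qed
  note a = gen[of m] and b = gen[of "Suc m"]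
  show ?thesis unfolding b a by (simp add: algebra_simps power2_eq_square power3_eq_cube)
qed


lemma card_bij_filter:
  assumes "bij_betw f A B"
  shows "card {b\<in>B. P b} = card {a\<in>A. P (f a)}"
proof -
  have "{b\<in>B. P b} = f ` {a\<in>A. P (f a)}"
    using assms by (auto simp: bij_betw_def)
  moreover have "inj_on f {a\<in>A. P (f a)}"
    using assms by (auto simp: bij_betw_def inj_on_def)
  ultimately show ?thesis by (simp add: card_image)
qed

lemma nonzero_entry:
  assumes "x \<noteq> replicate (length x) 0"
  shows "\<exists>i<length x. x ! i \<noteq> 0"
  using assms by (metis (mono_tags) list_eq_iff_nth_eq length_replicate nth_replicate)

lemma partner:
  fixes x :: "'a list"
  assumes lx: "length x = n" and nz: "x \<noteq> replicate n 0" and iso: "herm q x x = 0"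
  shows "\<exists>y. length y = n \<and> herm q y y = 0 \<and> herm q x y = 1"
proof -
  obtain i where i: "i < n" "x ! i \<noteq> 0" using nonzero_entry[of x] lx nz by auto
  define t where "t = cj (inverse (x ! i))"
  define y0 where "y0 = (replicate n (0::'a))[i := t]"
  have ly0: "length y0 = n" by (simp add: y0_def)
  have "herm q x y0 = (\<Sum>k<n. if k = i then x ! k * cj t else 0)"
    unfolding herm_cj lx by (rule sum.cong) (auto simp: y0_def nth_list_update)
  also have "\<dots> = x ! i * cj t" using i by simp
  also have "\<dots> = 1" using i by (simp add: t_def)
  finally have xy0: "herm q x y0 = 1" .
  have y0x: "herm q y0 x = 1" using herm_swap[of x y0] xy0 lx ly0 by simp
  define h0 where "h0 = herm q y0 y0"
  have "cj (- h0) = - h0" by (simp add: h0_def cj_neg herm_self_fix)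
  hence "card {s. s + cj s = - h0} = q" by (rule trace_count)
  hence "{s. s + cj s = - h0} \<noteq> {}" using q2 by (metis card.empty not_numeral_le_zero)
  then obtain s where s: "s + cj s = - h0" by auto
  define y where "y = vadd y0 (smult_vec s x)"
  have ly: "length y = n" by (simp add: y_def ly0 lx)
  have "herm q y y = herm q y0 y0 + cj s * herm q y0 x + (s * herm q x y0 + s * (cj s * herm q x x))"
    unfolding y_def using lx ly0
    by (simp add: herm_vadd1 herm_vadd2 herm_smult1 herm_smult2 distrib_left)
  also have "\<dots> = 0" using s by (simp add: xy0 y0x iso h0_def algebra_simps eq_neg_iff_add_eq_0)
  finally have yy: "herm q y y = 0" .
  have "herm q x y = 1" unfolding y_def using lx ly0
    by (simp add: herm_vadd2 herm_smult2 xy0 iso)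
  thus ?thesis using ly yy by blast
qed

lemma decomp:
  fixes x y :: "'a list"
  assumes lx: "length x = n" and ly: "length y = n"
    and xx: "herm q x x = 0" and yy: "herm q y y = 0" and xy: "herm q x y = 1"
  shows "\<exists>A B. Nc n = B * (q ^ 3 - q) + q ^ 2 * A
     \<and> card {z :: 'a list. length z = n \<and> herm q z z = 0 \<and> herm q x z = 0} = q ^ 2 * A
     \<and> q ^ (2 * n) = B * q ^ 4"
proof -
  have yx: "herm q y x = 1" using herm_swap[of x y] xy lx ly by simp
  define V where "V = {z :: 'a list. length z = n}"
  define W where "W = {w :: 'a list. length w = n \<and> herm q w x = 0 \<and> herm q w y = 0}"
  define Psi where "Psi = (\<lambda>(w :: 'a list, (a :: 'a, b :: 'a)). vadd (vadd (smult_vec a x) (smult_vec b y)) w)"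
  define Phi where "Phi = (\<lambda>z :: 'a list. (vsub (vsub z (smult_vec (herm q z y) x)) (smult_vec (herm q z x) y),
                                     (herm q z y, herm q z x)))"
  have hsimps: "herm q (Psi (w, a, b)) u = a * herm q x u + b * herm q y u + herm q w u"
    if "length w = n" "length u = n" for w a b u
    using that lx ly by (simp add: Psi_def herm_vadd1 herm_smult1)
  have bij: "bij_betw Psi (W \<times> (UNIV \<times> UNIV)) V"
  proof (rule bij_betw_byWitness[where f'=Phi])
    show "\<forall>p\<in>W \<times> (UNIV \<times> UNIV). Phi (Psi p) = p"
    proof
      fix p :: "'a list \<times> 'a \<times> 'a" assume "p \<in> W \<times> (UNIV \<times> UNIV)"
      then obtain w and a b :: 'a where p: "p = (w, a, b)" "w \<in> W" by auto
      hence lw: "length w = n" and wx: "herm q w x = 0" and wy: "herm q w y = 0" by (auto simp: W_def)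
      have e1: "herm q (Psi (w, a, b)) y = a" using hsimps[OF lw ly] xy yy wy by simp
      have e2: "herm q (Psi (w, a, b)) x = b" using hsimps[OF lw lx] xx yx wx by simp
      have e3: "vsub (vsub (Psi (w, a, b)) (smult_vec a x)) (smult_vec b y) = w"
        by (rule nth_equalityI) (auto simp: Psi_def lx ly lw)
      show "Phi (Psi p) = p" unfolding p Phi_def using e1 e2 e3 by simp
    qed
    show "\<forall>z\<in>V. Psi (Phi z) = z"
    proof
      fix z assume "z \<in> V"
      hence lz: "length z = n" by (simp add: V_def)
      show "Psi (Phi z) = z"
        by (rule nth_equalityI) (auto simp: Psi_def Phi_def lx ly lz)
    qed
    show "Psi ` (W \<times> (UNIV \<times> UNIV)) \<subseteq> V"
      by (auto simp: Psi_def V_def W_def lx ly)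
    show "Phi ` V \<subseteq> W \<times> (UNIV \<times> UNIV)"
    proof
      fix p assume "p \<in> Phi ` V"
      then obtain z where z: "z \<in> V" "p = Phi z" by auto
      hence lz: "length z = n" by (simp add: V_def)
      define w where "w = vsub (vsub z (smult_vec (herm q z y) x)) (smult_vec (herm q z x) y)"
      have lw: "length w = n" by (simp add: w_def lz lx ly)
      have "herm q w x = herm q z x - herm q z y * herm q x x - herm q z x * herm q y x"
        unfolding w_def using lz lx ly by (simp add: herm_vsub1 herm_smult1)
      hence wx: "herm q w x = 0" using xx yx by simp
      have "herm q w y = herm q z y - herm q z y * herm q x y - herm q z x * herm q y y"
        unfolding w_def using lz lx ly by (simp add: herm_vsub1 herm_smult1)
      hence wy: "herm q w y = 0" using xy yy by simp
      show "p \<in> W \<times> (UNIV \<times> UNIV)" using z lw wx wy by (simp add: Phi_def W_def w_def)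
    qed
  qed
  have psipsi: "herm q (Psi (w, a, b)) (Psi (w, a, b)) = a * cj b + b * cj a + herm q w w"
    if "w \<in> W" for w a b
  proof -
    from that have lw: "length w = n" and wx: "herm q w x = 0" and wy: "herm q w y = 0" by (auto simp: W_def)
    have xw: "herm q x w = 0" using herm_swap[of w x] wx lw lx by simp
    have yw: "herm q y w = 0" using herm_swap[of w y] wy lw ly by simp
    have lP: "length (Psi (w, a, b)) = n" by (simp add: Psi_def lx ly lw)
    have "herm q (Psi (w, a, b)) (Psi (w, a, b)) =
        a * herm q x (Psi (w, a, b)) + b * herm q y (Psi (w, a, b)) + herm q w (Psi (w, a, b))"
      by (rule hsimps[OF lw lP])
    also have "herm q x (Psi (w, a, b)) = cj a * herm q x x + cj b * herm q x y + herm q x w"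
      using lx ly lw by (simp add: Psi_def herm_vadd2 herm_smult2)
    also have "herm q y (Psi (w, a, b)) = cj a * herm q y x + cj b * herm q y y + herm q y w"
      using lx ly lw by (simp add: Psi_def herm_vadd2 herm_smult2)
    also have "herm q w (Psi (w, a, b)) = cj a * herm q w x + cj b * herm q w y + herm q w w"
      using lx ly lw by (simp add: Psi_def herm_vadd2 herm_smult2)
    finally show ?thesis using xx yy xy yx xw yw wx wy by (simp add: algebra_simps)
  qed
  have psix: "herm q x (Psi (w, a, b)) = 0 \<longleftrightarrow> b = 0" if "w \<in> W" for w and a b :: 'a
  proof -
    from that have lw: "length w = n" and wx: "herm q w x = 0" by (auto simp: W_def)
    have lP: "length (Psi (w, a, b)) = n" by (simp add: Psi_def lx ly lw)
    have "herm q (Psi (w, a, b)) x = b" using hsimps[OF lw lx] xx yx wx by simp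
    hence "herm q x (Psi (w, a, b)) = cj b" using herm_swap[of "Psi (w, a, b)" x] lP lx by simp
    thus ?thesis by simp
  qed
  have finW: "finite W" using finite_V[of n] by (rule rev_finite_subset) (auto simp: W_def)
  define A where "A = card {w\<in>W. herm q w w = 0}"
  define B where "B = card W"
  have cardV: "q ^ (2 * n) = B * q ^ 4"
  proof -
    have "card V = card (W \<times> ((UNIV :: 'a set) \<times> (UNIV :: 'a set)))" using bij_betw_same_card[OF bij] by simp
    also have "\<dots> = B * (card (UNIV :: 'a set) * card (UNIV :: 'a set))" by (simp only: card_cartesian_product B_def)
    also have "\<dots> = B * (q ^ 2 * q ^ 2)" by (simp only: card)
    finally show ?thesis using card_V[of n] by (simp add: V_def power_add[symmetric])
  qed
  have N: "Nc n = B * (q ^ 3 - q) + q ^ 2 * A"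
  proof -
    have "Nc n = card {z\<in>V. herm q z z = 0}" by (simp add: Nc_def V_def)
    also have "\<dots> = card {p\<in>W \<times> (UNIV \<times> UNIV). herm q (Psi p) (Psi p) = 0}"
      by (rule card_bij_filter[OF bij])
    also have "{p\<in>W \<times> (UNIV \<times> UNIV). herm q (Psi p) (Psi p) = 0} =
        (SIGMA w:W. {(a, b). a * cj b + b * cj a = - herm q w w})"
      by (auto simp: psipsi eq_neg_iff_add_eq_0 add.assoc)
    also have "card \<dots> = (\<Sum>w\<in>W. card {(a, b). a * cj b + b * cj a = - herm q w w})"
      by (rule card_SigmaI) (use finW in auto)
    also have "\<dots> = (\<Sum>w\<in>W. (q ^ 3 - q) + (if herm q w w = 0 then q ^ 2 else 0))"
      by (rule sum.cong[OF refl], subst pair_count) (auto simp: cj_neg herm_self_fix)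
    also have "\<dots> = B * (q ^ 3 - q) + q ^ 2 * A"
      by (simp add: sum.distrib B_def A_def sum.inter_filter[OF finW, symmetric])
    finally show ?thesis .
  qed
  have F: "card {z :: 'a list. length z = n \<and> herm q z z = 0 \<and> herm q x z = 0} = q ^ 2 * A"
  proof -
    have "card {z :: 'a list. length z = n \<and> herm q z z = 0 \<and> herm q x z = 0}
        = card {z\<in>V. herm q z z = 0 \<and> herm q x z = 0}" by (simp add: V_def)
    also have "\<dots> = card {p\<in>W \<times> (UNIV \<times> UNIV). herm q (Psi p) (Psi p) = 0 \<and> herm q x (Psi p) = 0}"
      by (rule card_bij_filter[OF bij])
    also have "{p\<in>W \<times> (UNIV \<times> UNIV). herm q (Psi p) (Psi p) = 0 \<and> herm q x (Psi p) = 0} =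
        (\<lambda>(w, a). (w, a, 0)) ` ({w\<in>W. herm q w w = 0} \<times> UNIV)"
      by (auto simp: psipsi psix image_iff)
    also have "card \<dots> = card ({w\<in>W. herm q w w = 0} \<times> (UNIV :: 'a set))"
      by (rule card_image) (auto simp: inj_on_def)
    also have "\<dots> = q ^ 2 * A" by (simp add: card_cartesian_product A_def card)
    finally show ?thesis .
  qed
  show ?thesis using N F cardV by blast
qed

lemma count_x:
  fixes x :: "'a list"
  assumes lx: "length x = Suc (Suc m)" and nz: "x \<noteq> replicate (Suc (Suc m)) 0" and iso: "herm q x x = 0"
  shows "card {z :: 'a list. length z = Suc (Suc m) \<and> herm q z z = 0 \<and> herm q x z = 0} = q ^ 2 * Nc m"
proof -
  obtain y where y: "length y = Suc (Suc m)" "herm q y y = 0" "herm q x y = 1"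
    using partner[OF lx nz iso] by blast
  obtain A B where AB: "Nc (Suc (Suc m)) = B * (q ^ 3 - q) + q ^ 2 * A"
     "card {z :: 'a list. length z = Suc (Suc m) \<and> herm q z z = 0 \<and> herm q x z = 0} = q ^ 2 * A"
     "q ^ (2 * Suc (Suc m)) = B * q ^ 4"
    using decomp[OF lx y(1) iso y(2) y(3)] by blast
  have q0: "q > 0" using q2 by simp
  have e: "2 * Suc (Suc m) = 2 * m + 4" by simp
  have qe: "q ^ (2 * Suc (Suc m)) = q ^ (2 * m) * q ^ 4" unfolding e by (rule power_add)
  have c4: "q ^ 4 \<noteq> 0" using q0 by simp
  have "B * q ^ 4 = q ^ (2 * m) * q ^ 4" using AB(3) qe by metis
  hence B: "B = q ^ (2 * m)" using mult_right_cancel[OF c4] by blast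
  have "int (Nc (Suc (Suc m))) = int B * (int q ^ 3 - int q) + int q ^ 2 * int A"
  proof -
    have "q \<le> q ^ 3" using q0 by (simp add: power3_eq_cube)
    thus ?thesis using AB(1) by (simp add: of_nat_diff)
  qed
  hence "A = Nc m" using Nc_SucSuc[of m] B q0 by auto
  thus ?thesis using AB(2) by simp
qed

end

lemma smult_zero_vec: "smult_vec 0 x = replicate (length x) (0::'a::field)"
  by (rule nth_equalityI) auto

theorem lemma3p2:
  fixes \<alpha> :: "'a::{finite, field}" and q p e n h :: nat and x y :: "'a list"
  assumes "prime p" and "e \<ge> 1" and "q = p ^ e"
    and "card (UNIV :: 'a set) = q ^ 2"
    and "primitive_elem \<alpha>"
    and "n \<ge> 4"
    and "h \<le> q ^ 2 - 2"
    and "(x, y) \<in> S_rel n q (\<alpha> ^ h)"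
  shows "card {z \<in> (Phi n q :: 'a list set). (x, z) \<in> T_rel n q \<and> (z, y) \<in> T_rel n q}
           = q ^ 2 * card (Phi (n - 2) q :: 'a list set)"
proof -
  have frob: "(a + b) ^ q = a ^ q + b ^ q" for a b :: 'a
    using char_frob[OF assms(1-4)] by blast
  have "p \<ge> 2" using assms(1) prime_ge_2_nat by blast
  moreover have "p \<le> q" using assms(2,3) \<open>p \<ge> 2\<close>
    using self_le_power[of p e] by simp
  ultimately have q2: "q \<ge> 2" by simp
  interpret H: hsetup q "\<lambda>t::'a. t ^ q"
    by standard (auto simp: frob assms(4) q2)
  define c where "c = \<alpha> ^ h"
  from assms(8) have xP: "x \<in> Phi n q" and yP: "y \<in> Phi n q" and yc: "y = smult_vec c x"
    by (auto simp: S_rel_def c_def)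
  hence lx: "length x = n" and nzx: "x \<noteq> replicate n 0" and xx: "herm q x x = 0"
    and ly: "length y = n" and nzy: "y \<noteq> replicate n 0"
    by (auto simp: Phi_def)
  have c0: "c \<noteq> 0" using nzy yc lx smult_zero_vec[of x] by auto
  obtain m where nm: "n = Suc (Suc m)" using assms(6) by (intro that[of "n - 2"]) simp
  define S where "S = {z :: 'a list. length z = n \<and> herm q z z = 0 \<and> herm q x z = 0}"
  have cS: "card S = q ^ 2 * H.Nc m"
    unfolding S_def nm by (rule H.count_x) (use lx nzx xx nm in auto)
  have xz_sym: "herm q x z = 0 \<longleftrightarrow> herm q z x = 0" if "length z = n" for z
    using H.herm_swap[of z x] that lx by auto
  have spanS: "span1 x \<subseteq> S"
  proof
    fix z assume "z \<in> span1 x"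
    then obtain d where z: "z = smult_vec d x" by (auto simp: span1_def)
    show "z \<in> S" unfolding S_def z using lx xx
      by (simp add: H.herm_smult1 H.herm_smult2)
  qed
  obtain i where i: "i < n" "x ! i \<noteq> 0" using H.nonzero_entry[of x] lx nzx by auto
  have card_span: "card (span1 x) = q ^ 2"
  proof -
    have "span1 x = (\<lambda>d. smult_vec d x) ` UNIV" by (auto simp: span1_def)
    moreover have "inj (\<lambda>d. smult_vec d x)"
    proof (rule injI)
      fix d d' assume "smult_vec d x = smult_vec d' x"
      hence "smult_vec d x ! i = smult_vec d' x ! i" by simp
      thus "d = d'" using i lx by simp
    qed
    ultimately show ?thesis using assms(4) by (simp add: card_image)
  qed
  have eq: "{z \<in> (Phi n q :: 'a list set). (x, z) \<in> T_rel n q \<and> (z, y) \<in> T_rel n q} = S - span1 x"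
  proof (intro equalityI subsetI)
    fix z assume "z \<in> {z \<in> (Phi n q :: 'a list set). (x, z) \<in> T_rel n q \<and> (z, y) \<in> T_rel n q}"
    thus "z \<in> S - span1 x" by (auto simp: T_rel_def Phi_def S_def)
  next
    fix z assume z: "z \<in> S - span1 x"
    hence lz: "length z = n" and zz: "herm q z z = 0" and xz: "herm q x z = 0" and zns: "z \<notin> span1 x"
      by (auto simp: S_def)
    have "smult_vec 0 x \<in> span1 x" by (auto simp: span1_def)
    hence nzz: "z \<noteq> replicate n 0" using zns smult_zero_vec[of x] lx by auto
    have zP: "z \<in> Phi n q" using lz zz nzz by (simp add: Phi_def)
    have zy: "herm q z y = 0" unfolding yc using lz lx xz xz_sym[OF lz]
      by (simp add: H.herm_smult2)
    have ynot: "y \<notin> span1 z"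
    proof
      assume "y \<in> span1 z"
      then obtain d where d: "y = smult_vec d z" by (auto simp: span1_def)
      have d0: "d \<noteq> 0" using d nzy smult_zero_vec[of z] lz by auto
      have "z = smult_vec (inverse d * c) x"
      proof (rule nth_equalityI)
        show "length z = length (smult_vec (inverse d * c) x)" using lz lx by simp
        fix k assume "k < length z"
        hence k: "k < n" using lz by simp
        have "y ! k = d * z ! k" using d k lz by simp
        moreover have "y ! k = c * x ! k" using yc k lx by simp
        ultimately have "z ! k = inverse d * c * x ! k" using d0 by (simp add: field_simps)
        thus "z ! k = smult_vec (inverse d * c) x ! k" using k lx by simp
      qed
      hence "z \<in> span1 x" by (auto simp: span1_def)
      thus False using zns by simp
    qed
    show "z \<in> {z \<in> (Phi n q :: 'a list set). (x, z) \<in> T_rel n q \<and> (z, y) \<in> T_rel n q}"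
      using zP xP yP xz zns zy ynot by (simp add: T_rel_def)
  qed
  have fS: "finite S" using H.finite_V[of n] by (rule rev_finite_subset) (auto simp: S_def)
  have cT: "card (S - span1 x) = q ^ 2 * H.Nc m - q ^ 2"
    using card_Diff_subset[OF finite_subset[OF spanS fS] spanS] cS card_span by simp
  have cPhi: "card (Phi m q :: 'a list set) = H.Nc m - 1"
  proof -
    have "(Phi m q :: 'a list set) = {v :: 'a list. length v = m \<and> herm q v v = 0} - {replicate m 0}"
      by (auto simp: Phi_def)
    thus ?thesis by (simp add: H.Nc_def card_Diff_singleton)
  qed
  show ?thesis unfolding eq cT using nm cPhi by (simp add: diff_mult_distrib2)
qed

end
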